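(* Let $U\subset\mathbb{C}$ be connected and simply connected, let $a,\mu:U\to\mathbb{C}$ be holomorphic with $\mu\neq0$ and $|a|\neq1$ on $U$, and let $F(\theta;w)$ be the associated $\theta$-family. The following are equivalent: (1) there exists $\theta_0\in\mathbb{R}$ such that $K(F(\theta_0;w))=0$ for every $w\in U$; (2) the map $a(w)$ is constant on $U$; (3) for every $\theta$, the normal maps $L_3(a)$ and $L_0(ae^{i\theta})$ are constant maps from $U$ into the light cone $\mathcal{C}$; (4) for all $\theta\in\mathbb{R}$, the set of planar points of $F(\theta;U)$ is all of $U$.
   Context: $\mathbb{R}^4_1$ has Lorentz product $-x^0y^0+x^1y^1+x^2y^2+x^3y^3$; $\mathcal{C}$ is its light cone of nonzero null vectors. With $W(a,b)=(a+b,1+ab,i(1-ab),a-b)$, the $\theta$-family is $F(\theta;w)=P+2\operatorname{Re}\int_{w_0}^{w}\mu(\xi)W(a(\xi),e^{i\theta}a(\xi))\,d\xi$, and $K(F(\theta;w))$ denotes the Gauss curvature of $F(\theta;\cdot)$ at $w$; a planar point is one where this curvature vanishes. The lightlike normal maps are $L_3(a)=(1+a\bar a,\;a+\bar a,\;-i(a-\bar a),\;-1+a\bar a)$ and $L_0(e^{i\theta}a)=(1+a\bar a,\;ae^{i\theta}+\bar ae^{-i\theta},\;-i(ae^{i\theta}-\bar ae^{-i\theta}),\;1-a\bar a)$. *)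

theory Defs
  imports "HOL-Analysis.Analysis"
begin

text \<open>Vectors of R^4 (and C^4) are represented as functions on nat, with
components 0,1,2,3 (all other components are 0).\<close>

definition vec4 :: "'a::zero \<Rightarrow> 'a \<Rightarrow> 'a \<Rightarrow> 'a \<Rightarrow> nat \<Rightarrow> 'a" where
  "vec4 c0 c1 c2 c3 = (\<lambda>k. if k = 0 then c0 else if k = 1 then c1
      else if k = 2 then c2 else if k = 3 then c3 else 0)"

definition lor :: "(nat \<Rightarrow> real) \<Rightarrow> (nat \<Rightarrow> real) \<Rightarrow> real" where
  "lor x y = - x 0 * y 0 + x 1 * y 1 + x 2 * y 2 + x 3 * y 3"

definition light_cone :: "(nat \<Rightarrow> real) set" where
  "light_cone = {x. (\<forall>k\<ge>4. x k = 0) \<and> (\<exists>k<4. x k \<noteq> 0) \<and> lor x x = 0}"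

definition Wv :: "complex \<Rightarrow> complex \<Rightarrow> nat \<Rightarrow> complex" where
  "Wv a b = vec4 (a + b) (1 + a * b) (\<i> * (1 - a * b)) (a - b)"

text \<open>Component k of the holomorphic primitive of mu W(a, e^{i theta} a) on U,
  normalised to vanish at w0 (and set to 0 outside U so that it is unique).\<close>
definition prim :: "complex set \<Rightarrow> complex \<Rightarrow> (complex \<Rightarrow> complex) \<Rightarrow> (complex \<Rightarrow> complex)
     \<Rightarrow> real \<Rightarrow> nat \<Rightarrow> complex \<Rightarrow> complex" where
  "prim U w0 a \<mu> \<theta> k = (THE \<Psi>. (\<forall>w\<in>U. (\<Psi> has_field_derivative
        (\<mu> w * Wv (a w) (exp (\<i> * of_real \<theta>) * a w) k)) (at w))
      \<and> \<Psi> w0 = 0 \<and> (\<forall>w. w \<notin> U \<longrightarrow> \<Psi> w = 0))"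

definition theta_family :: "complex set \<Rightarrow> complex \<Rightarrow> (nat \<Rightarrow> real) \<Rightarrow> (complex \<Rightarrow> complex)
     \<Rightarrow> (complex \<Rightarrow> complex) \<Rightarrow> real \<Rightarrow> complex \<Rightarrow> nat \<Rightarrow> real" where
  "theta_family U w0 P a \<mu> \<theta> w =
     (\<lambda>k. if k < 4 then P k + 2 * Re (prim U w0 a \<mu> \<theta> k w) else 0)"

definition dx :: "(complex \<Rightarrow> real) \<Rightarrow> complex \<Rightarrow> real" where
  "dx g w = deriv (\<lambda>t. g (w + of_real t)) 0"
definition dy :: "(complex \<Rightarrow> real) \<Rightarrow> complex \<Rightarrow> real" where
  "dy g w = deriv (\<lambda>t. g (w + \<i> * of_real t)) 0"

definition dxv :: "(complex \<Rightarrow> nat \<Rightarrow> real) \<Rightarrow> complex \<Rightarrow> nat \<Rightarrow> real" where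
  "dxv f w = (\<lambda>k. dx (\<lambda>z. f z k) w)"
definition dyv :: "(complex \<Rightarrow> nat \<Rightarrow> real) \<Rightarrow> complex \<Rightarrow> nat \<Rightarrow> real" where
  "dyv f w = (\<lambda>k. dy (\<lambda>z. f z k) w)"

text \<open>Gauss curvature of the induced metric (first fundamental form w.r.t. the
  Lorentz product), via Brioschi's formula.\<close>
definition gauss_curvature :: "(complex \<Rightarrow> nat \<Rightarrow> real) \<Rightarrow> complex \<Rightarrow> real" where
  "gauss_curvature f w =
    (let E = (\<lambda>z. lor (dxv f z) (dxv f z));
         F = (\<lambda>z. lor (dxv f z) (dyv f z));
         G = (\<lambda>z. lor (dyv f z) (dyv f z));
         e = E w; ff = F w; g = G w;
         Eu = dx E w; Ev = dy E w; Fu = dx F w; Fv = dy F w; Gu = dx G w; Gv = dy G w;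
         Evv = dy (dy E) w; Fuv = dy (dx F) w; Guu = dx (dx G) w;
         det3 = (\<lambda>a11 a12 a13 a21 a22 a23 a31 a32 a33::real.
                   a11 * (a22 * a33 - a23 * a32) - a12 * (a21 * a33 - a23 * a31)
                   + a13 * (a21 * a32 - a22 * a31))
     in (det3 (- Evv / 2 + Fuv - Guu / 2) (Eu / 2) (Fu - Ev / 2)
              (Fv - Gu / 2) e ff
              (Gv / 2) ff g
         - det3 0 (Ev / 2) (Gu / 2)
              (Ev / 2) e ff
              (Gu / 2) ff g) / (e * g - ff ^ 2) ^ 2)"

definition planar_points :: "(complex \<Rightarrow> nat \<Rightarrow> real) \<Rightarrow> complex set \<Rightarrow> complex set" where
  "planar_points f U = {w \<in> U. gauss_curvature f w = 0}"

text \<open>Lightlike normal maps (the given complex expressions are real).\<close>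
definition L3 :: "complex \<Rightarrow> nat \<Rightarrow> real" where
  "L3 a = vec4 (Re (1 + a * cnj a)) (Re (a + cnj a)) (Re (- \<i> * (a - cnj a))) (Re (-1 + a * cnj a))"

definition L0 :: "complex \<Rightarrow> nat \<Rightarrow> real" where
  "L0 b = vec4 (Re (1 + b * cnj b)) (Re (b + cnj b)) (Re (- \<i> * (b - cnj b))) (Re (1 - b * cnj b))"

end

theory Submission
  imports Defs "HOL-Complex_Analysis.Complex_Analysis"
begin


lemma line_x:
  assumes "(g has_field_derivative g') (at z)"
  shows "((\<lambda>t::real. g (z + of_real t)) has_vector_derivative g') (at 0)"
proof -
  have "((\<lambda>x. g (z + x)) has_field_derivative g') (at (of_real 0))"
  proof -
    have "((\<lambda>x. z + x) has_field_derivative 1) (at 0)" by (auto intro!: derivative_eq_intros)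
    from DERIV_chain2[OF _ this, of g g'] assms show ?thesis by simp
  qed
  then show ?thesis using has_vector_derivative_real_field by fastforce
qed

lemma line_y:
  assumes "(g has_field_derivative g') (at z)"
  shows "((\<lambda>t::real. g (z + \<i> * of_real t)) has_vector_derivative (\<i> * g')) (at 0)"
proof -
  have "((\<lambda>x. g (z + \<i> * x)) has_field_derivative g' * \<i>) (at (of_real 0))"
  proof -
    have "((\<lambda>x. z + \<i> * x) has_field_derivative \<i>) (at 0)" by (auto intro!: derivative_eq_intros)
    from DERIV_chain2[OF _ this, of g g'] assms show ?thesis by simp
  qed
  then show ?thesis using has_vector_derivative_real_field by (fastforce simp: mult.commute)
qed

lemma Re_x: "(g has_field_derivative g') (at z) \<Longrightarrow> D = Re g' \<Longrightarrow>
   ((\<lambda>t::real. Re (g (z + of_real t))) has_real_derivative D) (at 0)"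
  using has_field_derivative_Re line_x by blast
lemma Im_x: "(g has_field_derivative g') (at z) \<Longrightarrow> D = Im g' \<Longrightarrow>
   ((\<lambda>t::real. Im (g (z + of_real t))) has_real_derivative D) (at 0)"
  using has_field_derivative_Im line_x by blast
lemma Re_y: "(g has_field_derivative g') (at z) \<Longrightarrow> D = - Im g' \<Longrightarrow>
   ((\<lambda>t::real. Re (g (z + \<i> * of_real t))) has_real_derivative D) (at 0)"
  using has_field_derivative_Re[OF line_y] by fastforce
lemma Im_y: "(g has_field_derivative g') (at z) \<Longrightarrow> D = Re g' \<Longrightarrow>
   ((\<lambda>t::real. Im (g (z + \<i> * of_real t))) has_real_derivative D) (at 0)"
  using has_field_derivative_Im[OF line_y] by fastforce
lemma ev_x: "open (U::complex set) \<Longrightarrow> z \<in> U \<Longrightarrow> eventually (\<lambda>t::real. z + of_real t \<in> U) (nhds 0)"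
proof -
  assume a: "open U" "z \<in> U"
  have "open ((\<lambda>t::real. z + of_real t) -` U)" by (rule open_vimage[OF a(1)]) (intro continuous_intros)
  from eventually_nhds_in_open[OF this] a show ?thesis by simp
qed
lemma ev_y: "open (U::complex set) \<Longrightarrow> z \<in> U \<Longrightarrow> eventually (\<lambda>t::real. z + \<i> * of_real t \<in> U) (nhds 0)"
proof -
  assume a: "open U" "z \<in> U"
  have "open ((\<lambda>t::real. z + \<i> * of_real t) -` U)" by (rule open_vimage[OF a(1)]) (intro continuous_intros)
  from eventually_nhds_in_open[OF this] a show ?thesis by simp
qed

lemma dx_cong: "open U \<Longrightarrow> z \<in> U \<Longrightarrow> (\<And>x. x \<in> U \<Longrightarrow> h1 x = h2 x) \<Longrightarrow> dx h1 z = dx h2 z"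
  unfolding dx_def by (rule deriv_cong_ev) (auto elim: eventually_mono[OF ev_x])
lemma dy_cong: "open U \<Longrightarrow> z \<in> U \<Longrightarrow> (\<And>x. x \<in> U \<Longrightarrow> h1 x = h2 x) \<Longrightarrow> dy h1 z = dy h2 z"
  unfolding dy_def by (rule deriv_cong_ev) (auto elim: eventually_mono[OF ev_y])
lemma dx_eq: "((\<lambda>t. h (z + of_real t)) has_real_derivative D) (at 0) \<Longrightarrow> dx h z = D"
  unfolding dx_def by (rule DERIV_imp_deriv)
lemma dy_eq: "((\<lambda>t. h (z + \<i> * of_real t)) has_real_derivative D) (at 0) \<Longrightarrow> dy h z = D"
  unfolding dy_def by (rule DERIV_imp_deriv)
lemma Wv_holo: "a holomorphic_on U \<Longrightarrow> (\<lambda>w. Wv (a w) (c * a w) k) holomorphic_on U"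
  unfolding Wv_def vec4_def
  by (cases "k = 0"; cases "k = 1"; cases "k = 2"; cases "k = 3") (auto intro!: holomorphic_intros)

lemma prim_deriv:
  assumes U: "open U" "simply_connected U" "w0 \<in> U"
    and ha: "a holomorphic_on U" and hm: "\<mu> holomorphic_on U"
  shows "\<forall>w\<in>U. (prim U w0 a \<mu> \<theta> k has_field_derivative
        (\<mu> w * Wv (a w) (exp (\<i> * of_real \<theta>) * a w) k)) (at w)"
proof -
  define \<phi> where "\<phi> = (\<lambda>w. \<mu> w * Wv (a w) (exp (\<i> * of_real \<theta>) * a w) k)"
  have hphi: "\<phi> holomorphic_on U" unfolding \<phi>_def
    by (intro holomorphic_intros hm Wv_holo ha)
  have conn: "connected U" using U simply_connected_imp_connected by blast
  obtain h where h: "\<And>z. z \<in> U \<Longrightarrow> (h has_field_derivative \<phi> z) (at z)"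
    using U(2) hphi simply_connected_eq_global_primitive[OF U(1)] by blast
  define \<Psi> where "\<Psi> = (\<lambda>w. if w \<in> U then h w - h w0 else 0)"
  let ?P = "\<lambda>\<Psi>. (\<forall>w\<in>U. (\<Psi> has_field_derivative \<phi> w) (at w)) \<and> \<Psi> w0 = 0 \<and> (\<forall>w. w \<notin> U \<longrightarrow> \<Psi> w = 0)"
  have P1: "?P \<Psi>"
  proof (intro conjI ballI allI impI)
    fix w assume "w \<in> U"
    have "((\<lambda>w. h w - h w0) has_field_derivative \<phi> w) (at w)"
      using h[OF \<open>w \<in> U\<close>] by (auto intro!: derivative_eq_intros)
    then show "(\<Psi> has_field_derivative \<phi> w) (at w)"
      by (rule has_field_derivative_transform_within_open[OF _ U(1) \<open>w \<in> U\<close>]) (simp add: \<Psi>_def)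
  qed (simp_all add: \<Psi>_def U)
  have uniq: "\<Psi>2 = \<Psi>" if "?P \<Psi>2" for \<Psi>2
  proof -
    have "(\<lambda>w. \<Psi>2 w - \<Psi> w) constant_on U"
    proof (rule has_field_derivative_0_imp_constant_on[OF _ conn U(1)])
      fix z assume "z \<in> U"
      then have "(\<Psi>2 has_field_derivative \<phi> z) (at z)" "(\<Psi> has_field_derivative \<phi> z) (at z)"
        using that P1 by auto
      from DERIV_diff[OF this] show "((\<lambda>w. \<Psi>2 w - \<Psi> w) has_field_derivative 0) (at z)" by simp
    qed
    then obtain c where c: "\<And>w. w \<in> U \<Longrightarrow> \<Psi>2 w - \<Psi> w = c" by (auto simp: constant_on_def)
    have "c = 0" using c[OF U(3)] that P1 by simp
    show ?thesis
    proof
      fix w show "\<Psi>2 w = \<Psi> w" using c \<open>c = 0\<close> that P1 by (cases "w \<in> U") auto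
    qed
  qed
  have "prim U w0 a \<mu> \<theta> k = \<Psi>"
  proof -
    have "prim U w0 a \<mu> \<theta> k = (THE \<Psi>. ?P \<Psi>)" unfolding prim_def \<phi>_def by simp
    also have "\<dots> = \<Psi>" by (rule the_equality[where P = ?P, OF P1 uniq])
    finally show ?thesis .
  qed
  then show ?thesis using P1 unfolding \<phi>_def by simp
qed



definition msq :: "(complex \<Rightarrow> complex) \<Rightarrow> complex \<Rightarrow> real" where
  "msq g z = (Re (g z))\<^sup>2 + (Im (g z))\<^sup>2"
definition msq_x :: "(complex \<Rightarrow> complex) \<Rightarrow> complex \<Rightarrow> real" where
  "msq_x g z = 2 * (Re (g z) * Re (deriv g z) + Im (g z) * Im (deriv g z))"
definition msq_y :: "(complex \<Rightarrow> complex) \<Rightarrow> complex \<Rightarrow> real" where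
  "msq_y g z = 2 * (Im (g z) * Re (deriv g z) - Re (g z) * Im (deriv g z))"
definition msq_xx :: "(complex \<Rightarrow> complex) \<Rightarrow> complex \<Rightarrow> real" where
  "msq_xx g z = 2 * ((Re (deriv g z))\<^sup>2 + (Im (deriv g z))\<^sup>2
      + Re (g z) * Re (deriv (deriv g) z) + Im (g z) * Im (deriv (deriv g) z))"
definition msq_yy :: "(complex \<Rightarrow> complex) \<Rightarrow> complex \<Rightarrow> real" where
  "msq_yy g z = 2 * ((Re (deriv g z))\<^sup>2 + (Im (deriv g z))\<^sup>2
      - Re (g z) * Re (deriv (deriv g) z) - Im (g z) * Im (deriv (deriv g) z))"

context
  fixes g :: "complex \<Rightarrow> complex" and U :: "complex set" and z :: complex
  assumes hg: "g holomorphic_on U" and oU: "open U" and zU: "z \<in> U"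
begin

lemma hd1: "(g has_field_derivative deriv g z) (at z)"
  using hg oU zU holomorphic_derivI by blast
lemma hd2: "(deriv g has_field_derivative deriv (deriv g) z) (at z)"
  using holomorphic_deriv[OF hg oU] oU zU holomorphic_derivI by blast

lemma msq_dx: "((\<lambda>t. msq g (z + of_real t)) has_real_derivative msq_x g z) (at 0)"
  unfolding msq_def msq_x_def
  by (rule Re_x[OF hd1] Im_x[OF hd1] derivative_eq_intros refl | simp)+
lemma msq_dy: "((\<lambda>t. msq g (z + \<i> * of_real t)) has_real_derivative msq_y g z) (at 0)"
  unfolding msq_def msq_y_def
  by (rule Re_y[OF hd1] Im_y[OF hd1] derivative_eq_intros refl | simp)+
lemma msq_dxx: "((\<lambda>t. msq_x g (z + of_real t)) has_real_derivative msq_xx g z) (at 0)"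
  unfolding msq_xx_def msq_x_def
  by (rule Re_x[OF hd1] Im_x[OF hd1] Re_x[OF hd2] Im_x[OF hd2] derivative_eq_intros refl | simp)+ (simp add: algebra_simps power2_eq_square)
lemma msq_dyy: "((\<lambda>t. msq_y g (z + \<i> * of_real t)) has_real_derivative msq_yy g z) (at 0)"
  unfolding msq_yy_def msq_y_def
  by (rule Re_y[OF hd1] Im_y[OF hd1] Re_y[OF hd2] Im_y[OF hd2] derivative_eq_intros refl | simp)+ (simp add: algebra_simps power2_eq_square)
end

lemma msq_lap: "msq_xx g z + msq_yy g z = 4 * msq (deriv g) z"
  unfolding msq_xx_def msq_yy_def msq_def by simp
lemma msq_grad: "(msq_x g z)\<^sup>2 + (msq_y g z)\<^sup>2 = 4 * msq g z * msq (deriv g) z"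
  unfolding msq_x_def msq_y_def msq_def by (simp add: algebra_simps power2_eq_square)


lemma alg_E: "lor (\<lambda>k. if k < 4 then 2 * Re (m * Wv x y k) else 0) (\<lambda>k. if k < 4 then 2 * Re (m * Wv x y k) else 0)
   = 4 * ((Re m)\<^sup>2 + (Im m)\<^sup>2) * ((Re x * Re y + Im x * Im y - 1)\<^sup>2 + (Im x * Re y - Re x * Im y)\<^sup>2)"
  unfolding lor_def Wv_def vec4_def
  by (simp add: algebra_simps power2_eq_square)
lemma alg_G: "lor (\<lambda>k. if k < 4 then - 2 * Im (m * Wv x y k) else 0) (\<lambda>k. if k < 4 then - 2 * Im (m * Wv x y k) else 0)
   = 4 * ((Re m)\<^sup>2 + (Im m)\<^sup>2) * ((Re x * Re y + Im x * Im y - 1)\<^sup>2 + (Im x * Re y - Re x * Im y)\<^sup>2)"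
  unfolding lor_def Wv_def vec4_def
  by (simp add: algebra_simps power2_eq_square)
lemma alg_F: "lor (\<lambda>k. if k < 4 then 2 * Re (m * Wv x y k) else 0) (\<lambda>k. if k < 4 then - 2 * Im (m * Wv x y k) else 0)
   = 0"
  unfolding lor_def Wv_def vec4_def
  by (simp add: algebra_simps power2_eq_square)
lemma alg_n: "(Re e)\<^sup>2 + (Im e)\<^sup>2 = 1 \<Longrightarrow> ((Re x * Re (e*x) + Im x * Im (e*x) - 1)\<^sup>2 + (Im x * Re (e*x) - Re x * Im (e*x))\<^sup>2)
  = 1 - 2 * Re e * ((Re x)\<^sup>2 + (Im x)\<^sup>2) + ((Re x)\<^sup>2 + (Im x)\<^sup>2)\<^sup>2"
  by (simp add: algebra_simps power2_eq_square) algebra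

lemma big_alg:
  fixes m mx my mxx myy u ux uy uxx uyy c M A :: real
  assumes "mxx + myy = 4 * M" "mx\<^sup>2 + my\<^sup>2 = 4 * m * M" "uxx + uyy = 4 * A" "ux\<^sup>2 + uy\<^sup>2 = 4 * u * A"
  defines "n \<equiv> 1 - 2 * c * u + u\<^sup>2"
  shows "(4 * m * n) * (4 * (mxx * n + 2 * mx * ((2 * u - 2 * c) * ux) + m * (2 * ux\<^sup>2 + (2 * u - 2 * c) * uxx))
        + 4 * (myy * n + 2 * my * ((2 * u - 2 * c) * uy) + m * (2 * uy\<^sup>2 + (2 * u - 2 * c) * uyy)))
     - (4 * (mx * n + m * ((2 * u - 2 * c) * ux)))\<^sup>2 - (4 * (my * n + m * ((2 * u - 2 * c) * uy)))\<^sup>2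
     = 128 * m\<^sup>2 * A * (2 * u - c - c * u\<^sup>2)"
  using assms(1-4) unfolding n_def by algebra

lemma brioschi:
  fixes L Lx Ly Lxx Lyy :: real
  shows "(let det3 = (\<lambda>a11 a12 a13 a21 a22 a23 a31 a32 a33::real.
                   a11 * (a22 * a33 - a23 * a32) - a12 * (a21 * a33 - a23 * a31)
                   + a13 * (a21 * a32 - a22 * a31))
     in (det3 (- Lyy / 2 + 0 - Lxx / 2) (Lx / 2) (0 - Ly / 2)
              (0 - Lx / 2) L 0
              (Ly / 2) 0 L
         - det3 0 (Ly / 2) (Lx / 2)
              (Ly / 2) L 0
              (Lx / 2) 0 L) / (L * L - 0 ^ 2) ^ 2)
   = - (L / 2) * (L * (Lxx + Lyy) - Lx\<^sup>2 - Ly\<^sup>2) / (L\<^sup>2)\<^sup>2"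
  by (simp add: Let_def power2_eq_square algebra_simps divide_simps)


lemma core:
  assumes U: "open U" "simply_connected U" "w0 \<in> U"
    and ha: "a holomorphic_on U" and hm: "\<mu> holomorphic_on U" and wU: "w \<in> U"
  shows "gauss_curvature (theta_family U w0 P a \<mu> \<theta>) w =
    (let m = msq \<mu> w; u = msq a w; c = cos \<theta>; L = 4 * m * (1 - 2 * c * u + u\<^sup>2)
     in - (L / 2) * (128 * m\<^sup>2 * msq (deriv a) w * (2 * u - c - c * u\<^sup>2)) / (L\<^sup>2)\<^sup>2)"
proof -
  define e where "e = exp (\<i> * of_real \<theta>)"
  have ce: "Re e = cos \<theta>" "(Re e)\<^sup>2 + (Im e)\<^sup>2 = 1" unfolding e_def by (simp_all add: Re_exp Im_exp)
  define c where "c = cos \<theta>"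
  define f where "f = theta_family U w0 P a \<mu> \<theta>"
  define \<phi> where "\<phi> = (\<lambda>k z. \<mu> z * Wv (a z) (e * a z) k)"
  have pd: "\<And>k z. z \<in> U \<Longrightarrow> (prim U w0 a \<mu> \<theta> k has_field_derivative \<phi> k z) (at z)"
    using prim_deriv[OF U ha hm] unfolding \<phi>_def e_def by blast
  have dxv: "dxv f z = (\<lambda>k. if k < 4 then 2 * Re (\<phi> k z) else 0)" if "z \<in> U" for z
  proof
    fix k show "dxv f z k = (if k < 4 then 2 * Re (\<phi> k z) else 0)"
    proof (cases "k < 4")
      case True
      have "dx (\<lambda>z. f z k) z = 2 * Re (\<phi> k z)"
        unfolding f_def theta_family_def using True
        by (intro dx_eq) (rule derivative_eq_intros Re_x[OF pd[OF that]] refl | simp)+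
      then show ?thesis using True by (simp add: dxv_def)
    next
      case False
      then show ?thesis by (simp add: dxv_def f_def theta_family_def dx_def)
    qed
  qed
  have dyv: "dyv f z = (\<lambda>k. if k < 4 then - 2 * Im (\<phi> k z) else 0)" if "z \<in> U" for z
  proof
    fix k show "dyv f z k = (if k < 4 then - 2 * Im (\<phi> k z) else 0)"
    proof (cases "k < 4")
      case True
      have "dy (\<lambda>z. f z k) z = - 2 * Im (\<phi> k z)"
        unfolding f_def theta_family_def using True
        by (intro dy_eq) (rule derivative_eq_intros Re_y[OF pd[OF that]] refl | simp)+
      then show ?thesis using True by (simp add: dyv_def)
    next
      case False
      then show ?thesis by (simp add: dyv_def f_def theta_family_def dy_def)
    qed
  qed
  define L where "L = (\<lambda>z. 4 * msq \<mu> z * (1 - 2 * c * msq a z + (msq a z)\<^sup>2))"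
  define Lx where "Lx = (\<lambda>z. 4 * (msq_x \<mu> z * (1 - 2 * c * msq a z + (msq a z)\<^sup>2)
      + msq \<mu> z * ((2 * msq a z - 2 * c) * msq_x a z)))"
  define Ly where "Ly = (\<lambda>z. 4 * (msq_y \<mu> z * (1 - 2 * c * msq a z + (msq a z)\<^sup>2)
      + msq \<mu> z * ((2 * msq a z - 2 * c) * msq_y a z)))"
  define Lxx where "Lxx = (\<lambda>z. 4 * (msq_xx \<mu> z * (1 - 2 * c * msq a z + (msq a z)\<^sup>2)
      + 2 * msq_x \<mu> z * ((2 * msq a z - 2 * c) * msq_x a z)
      + msq \<mu> z * (2 * (msq_x a z)\<^sup>2 + (2 * msq a z - 2 * c) * msq_xx a z)))"
  define Lyy where "Lyy = (\<lambda>z. 4 * (msq_yy \<mu> z * (1 - 2 * c * msq a z + (msq a z)\<^sup>2)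
      + 2 * msq_y \<mu> z * ((2 * msq a z - 2 * c) * msq_y a z)
      + msq \<mu> z * (2 * (msq_y a z)\<^sup>2 + (2 * msq a z - 2 * c) * msq_yy a z)))"
  have EL: "lor (dxv f z) (dxv f z) = L z" if "z \<in> U" for z
    unfolding dxv[OF that] \<phi>_def alg_E alg_n[OF ce(2)] L_def c_def ce(1) msq_def by simp
  have GL: "lor (dyv f z) (dyv f z) = L z" if "z \<in> U" for z
    unfolding dyv[OF that] \<phi>_def alg_G alg_n[OF ce(2)] L_def c_def ce(1) msq_def by simp
  have FL: "lor (dxv f z) (dyv f z) = 0" if "z \<in> U" for z
    unfolding dyv[OF that] dxv[OF that] \<phi>_def alg_F by simp
  have dLx: "((\<lambda>t. L (z + of_real t)) has_real_derivative Lx z) (at 0)" if "z \<in> U" for z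
    unfolding L_def Lx_def
    by (rule msq_dx[OF hm U(1) that] msq_dx[OF ha U(1) that] derivative_eq_intros refl | simp)+
       (simp add: algebra_simps power2_eq_square)
  have dLy: "((\<lambda>t. L (z + \<i> * of_real t)) has_real_derivative Ly z) (at 0)" if "z \<in> U" for z
    unfolding L_def Ly_def
    by (rule msq_dy[OF hm U(1) that] msq_dy[OF ha U(1) that] derivative_eq_intros refl | simp)+
       (simp add: algebra_simps power2_eq_square)
  have dLxx: "((\<lambda>t. Lx (w + of_real t)) has_real_derivative Lxx w) (at 0)"
    unfolding Lx_def Lxx_def
    by (rule msq_dx[OF hm U(1) wU] msq_dx[OF ha U(1) wU] msq_dxx[OF hm U(1) wU] msq_dxx[OF ha U(1) wU]
        derivative_eq_intros refl | simp)+
       (simp add: algebra_simps power2_eq_square)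
  have dLyy: "((\<lambda>t. Ly (w + \<i> * of_real t)) has_real_derivative Lyy w) (at 0)"
    unfolding Ly_def Lyy_def
    by (rule msq_dy[OF hm U(1) wU] msq_dy[OF ha U(1) wU] msq_dyy[OF hm U(1) wU] msq_dyy[OF ha U(1) wU]
        derivative_eq_intros refl | simp)+
       (simp add: algebra_simps power2_eq_square)
  have Ex: "dx (\<lambda>z. lor (dxv f z) (dxv f z)) z = Lx z" if "z \<in> U" for z
    using dx_cong[OF U(1) that EL] dx_eq[OF dLx[OF that]] by simp
  have Ey: "dy (\<lambda>z. lor (dxv f z) (dxv f z)) z = Ly z" if "z \<in> U" for z
    using dy_cong[OF U(1) that EL] dy_eq[OF dLy[OF that]] by simp
  have Gx: "dx (\<lambda>z. lor (dyv f z) (dyv f z)) z = Lx z" if "z \<in> U" for z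
    using dx_cong[OF U(1) that GL] dx_eq[OF dLx[OF that]] by simp
  have Gy: "dy (\<lambda>z. lor (dyv f z) (dyv f z)) z = Ly z" if "z \<in> U" for z
    using dy_cong[OF U(1) that GL] dy_eq[OF dLy[OF that]] by simp
  have Fx: "dx (\<lambda>z. lor (dxv f z) (dyv f z)) z = 0" if "z \<in> U" for z
    using dx_cong[OF U(1) that FL] by (simp add: dx_def)
  have Fy: "dy (\<lambda>z. lor (dxv f z) (dyv f z)) z = 0" if "z \<in> U" for z
    using dy_cong[OF U(1) that FL] by (simp add: dy_def)
  have Eyy: "dy (dy (\<lambda>z. lor (dxv f z) (dxv f z))) w = Lyy w"
    using dy_cong[OF U(1) wU Ey] dy_eq[OF dLyy] by simp
  have Gxx: "dx (dx (\<lambda>z. lor (dyv f z) (dyv f z))) w = Lxx w"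
    using dx_cong[OF U(1) wU Gx] dx_eq[OF dLxx] by simp
  have Fxy: "dy (dx (\<lambda>z. lor (dxv f z) (dyv f z))) w = 0"
    using dy_cong[OF U(1) wU Fx] by (simp add: dy_def)
  have K: "gauss_curvature f w = - (L w / 2) * (L w * (Lxx w + Lyy w) - (Lx w)\<^sup>2 - (Ly w)\<^sup>2) / ((L w)\<^sup>2)\<^sup>2"
    unfolding gauss_curvature_def Let_def
    unfolding EL[OF wU] GL[OF wU] FL[OF wU] Ex[OF wU] Ey[OF wU] Gx[OF wU] Gy[OF wU] Fx[OF wU] Fy[OF wU]
      Eyy Gxx Fxy
    by (simp add: power2_eq_square algebra_simps divide_simps)
  have X: "L w * (Lxx w + Lyy w) - (Lx w)\<^sup>2 - (Ly w)\<^sup>2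
     = 128 * (msq \<mu> w)\<^sup>2 * msq (deriv a) w * (2 * msq a w - c - c * (msq a w)\<^sup>2)"
    unfolding L_def Lx_def Ly_def Lxx_def Lyy_def
    by (rule big_alg[OF msq_lap msq_grad msq_lap msq_grad])
  show ?thesis unfolding f_def[symmetric] K X by (simp add: Let_def L_def c_def)
qed



lemma msq_cmod: "msq g z = (cmod (g z))\<^sup>2"
  by (simp add: msq_def cmod_power2)

lemma deriv_const_on:
  assumes "open U" "w \<in> U" "\<forall>z\<in>U. a z = C"
  shows "deriv a w = 0"
proof -
  have "(a has_field_derivative 0) (at w)"
    by (rule has_field_derivative_transform_within_open[OF DERIV_const assms(1,2)]) (use assms in auto)
  then show ?thesis by (rule DERIV_imp_deriv)
qed

lemma three_roots:
  fixes c u1 u2 u3 :: real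
  assumes "2 * u1 - c - c * u1\<^sup>2 = 0" "2 * u2 - c - c * u2\<^sup>2 = 0" "2 * u3 - c - c * u3\<^sup>2 = 0"
    and "u1 < u2" "u2 < u3"
  shows False
proof -
  have "(u2 - u1) * (2 - c * (u1 + u2)) = 0" using assms(1,2) by (simp add: algebra_simps power2_eq_square)
  then have h1: "c * (u1 + u2) = 2" using assms(4) by simp
  have "(u3 - u2) * (2 - c * (u2 + u3)) = 0" using assms(2,3) by (simp add: algebra_simps power2_eq_square)
  then have h2: "c * (u2 + u3) = 2" using assms(5) by simp
  have "c * (u3 - u1) = c * (u2 + u3) - c * (u1 + u2)" by (simp add: algebra_simps)
  then have "c * (u3 - u1) = 0" using h1 h2 by simp
  then have "c = 0" using assms(4,5) by simp
  then show False using h1 by simp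
qed

lemma const_from:
  assumes oU: "open U" and cU: "connected U" and ha: "a holomorphic_on U"
    and h: "\<forall>w\<in>U. deriv a w = 0 \<or> 2 * (cmod (a w))\<^sup>2 - c - c * ((cmod (a w))\<^sup>2)\<^sup>2 = 0"
  shows "\<exists>C. \<forall>w\<in>U. a w = C"
proof (rule ccontr)
  assume nc: "\<not> (\<exists>C. \<forall>w\<in>U. a w = C)"
  have "\<exists>w1\<in>U. deriv a w1 \<noteq> 0"
  proof (rule ccontr)
    assume "\<not> (\<exists>w1\<in>U. deriv a w1 \<noteq> 0)"
    then have "a constant_on U"
      by (intro has_field_derivative_0_imp_constant_on[OF _ cU oU])
         (metis ha oU holomorphic_derivI)
    then show False using nc unfolding constant_on_def by blast
  qed
  then obtain w1 where w1: "w1 \<in> U" "deriv a w1 \<noteq> 0" by blast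
  have hd: "deriv a holomorphic_on U" using holomorphic_deriv[OF ha oU] .
  have "continuous_on U (deriv a)" using hd holomorphic_on_imp_continuous_on by blast
  then have "isCont (deriv a) w1" using continuous_on_eq_continuous_at oU w1(1) by blast
  then obtain r1 where r1: "r1 > 0" "\<forall>z. dist w1 z < r1 \<longrightarrow> deriv a z \<noteq> 0"
    using continuous_at_avoid[of w1 "deriv a" 0] w1(2) by blast
  obtain r2 where r2: "r2 > 0" "ball w1 r2 \<subseteq> U" using oU w1(1) open_contains_ball by blast
  define r where "r = min r1 r2"
  have r: "r > 0" "ball w1 r \<subseteq> U" "\<And>z. z \<in> ball w1 r \<Longrightarrow> deriv a z \<noteq> 0"
    using r1 r2 by (auto simp: r_def)
  have nc2: "\<not> a constant_on ball w1 r"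
  proof
    assume "a constant_on ball w1 r"
    then obtain C where "\<forall>z\<in>ball w1 r. a z = C" by (auto simp: constant_on_def)
    then have "deriv a w1 = 0" using deriv_const_on[of "ball w1 r" w1 a C] r by simp
    then show False using w1 by simp
  qed
  have "open (a ` ball w1 r)"
    by (rule open_mapping_thm[OF holomorphic_on_subset[OF ha r(2)] open_ball connected_ball open_ball order.refl nc2])
  moreover have "a w1 \<in> a ` ball w1 r" using r by simp
  ultimately obtain \<rho> where rho: "\<rho> > 0" "ball (a w1) \<rho> \<subseteq> a ` ball w1 r"
    using open_contains_ball by blast
  have P: "2 * (cmod z)\<^sup>2 - c - c * ((cmod z)\<^sup>2)\<^sup>2 = 0" if zin: "z \<in> ball (a w1) \<rho>" for z
  proof -
    obtain w where w: "w \<in> ball w1 r" "z = a w" using rho zin by blast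
    have "w \<in> U" "deriv a w \<noteq> 0" using w(1) r by auto
    then show ?thesis using h w(2) by blast
  qed
  define t where "t = cmod (a w1)"
  define d where "d = (if a w1 = 0 then 1 else a w1 / of_real t)"
  have d: "cmod d = 1" "a w1 = of_real t * d" by (auto simp: d_def t_def norm_divide)
  have Q: "2 * (s\<^sup>2) - c - c * (s\<^sup>2)\<^sup>2 = 0" if "s \<ge> 0" "\<bar>s - t\<bar> < \<rho>" for s
  proof -
    have "dist (a w1) (of_real s * d) = \<bar>s - t\<bar>"
    proof -
      have "a w1 - of_real s * d = of_real (t - s) * d" using d(2) by (simp add: algebra_simps)
      moreover have "cmod (of_real (t - s) :: complex) = \<bar>s - t\<bar>" by (simp only: norm_of_real abs_minus_commute)
      ultimately show ?thesis by (simp only: dist_norm norm_mult d(1) mult_1_right)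
    qed
    then have "of_real s * d \<in> ball (a w1) \<rho>" using that by simp
    from P[OF this] show ?thesis using that by (simp add: norm_mult d(1))
  qed
  have t0: "t \<ge> 0" by (simp add: t_def)
  show False
  proof (rule three_roots)
    show "2 * (t + \<rho>/4)\<^sup>2 - c - c * ((t + \<rho>/4)\<^sup>2)\<^sup>2 = 0" using Q[of "t + \<rho>/4"] t0 rho by simp
    show "2 * (t + \<rho>/2)\<^sup>2 - c - c * ((t + \<rho>/2)\<^sup>2)\<^sup>2 = 0" using Q[of "t + \<rho>/2"] t0 rho by simp
    show "2 * (t + 3*\<rho>/4)\<^sup>2 - c - c * ((t + 3*\<rho>/4)\<^sup>2)\<^sup>2 = 0" using Q[of "t + 3*\<rho>/4"] t0 rho by simp
    show "(t + \<rho>/4)\<^sup>2 < (t + \<rho>/2)\<^sup>2" using t0 rho by (intro power_strict_mono) auto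
    show "(t + \<rho>/2)\<^sup>2 < (t + 3*\<rho>/4)\<^sup>2" using t0 rho by (intro power_strict_mono) auto
  qed
qed




lemma K_const_zero:
  assumes U: "open U" "simply_connected U" "w0 \<in> U"
    and ha: "a holomorphic_on U" and hm: "\<mu> holomorphic_on U"
    and C: "\<exists>C. \<forall>w\<in>U. a w = C" and wU: "w \<in> U"
  shows "gauss_curvature (theta_family U w0 P a \<mu> \<theta>) w = 0"
proof -
  obtain C where "\<forall>w\<in>U. a w = C" using C by blast
  then have "deriv a w = 0" using deriv_const_on[OF U(1) wU] by blast
  then have "msq (deriv a) w = 0" by (simp add: msq_def)
  then show ?thesis by (simp add: core[OF U ha hm wU] Let_def)
qed

lemma K_zero_const:
  assumes U: "open U" "simply_connected U" "w0 \<in> U"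
    and ha: "a holomorphic_on U" and hm: "\<mu> holomorphic_on U"
    and m0: "\<forall>w\<in>U. \<mu> w \<noteq> 0" and a1: "\<forall>w\<in>U. cmod (a w) \<noteq> 1"
    and K: "\<forall>w\<in>U. gauss_curvature (theta_family U w0 P a \<mu> \<theta>) w = 0"
  shows "\<exists>C. \<forall>w\<in>U. a w = C"
proof (rule const_from[OF U(1) simply_connected_imp_connected[OF U(2)] ha, where c = "cos \<theta>"], intro ballI)
  fix w assume wU: "w \<in> U"
  define c where "c = cos \<theta>"
  define m where "m = msq \<mu> w"
  define u where "u = msq a w"
  define A where "A = msq (deriv a) w"
  define p where "p = 2 * u - c - c * u\<^sup>2"
  define L where "L = 4 * m * (1 - 2 * c * u + u\<^sup>2)"
  have m: "m \<noteq> 0" using m0 wU by (simp add: m_def msq_cmod)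
  have u: "u = (cmod (a w))\<^sup>2" by (simp add: u_def msq_cmod)
  have na: "cmod (a w) \<noteq> 1" "cmod (a w) \<ge> 0" using a1 wU by auto
  have u0: "u \<ge> 0" "u \<noteq> 1" unfolding u using na by (simp, smt (verit) power2_eq_1_iff)
  have n: "1 - 2 * c * u + u\<^sup>2 \<noteq> 0"
  proof
    assume n0: "1 - 2 * c * u + u\<^sup>2 = 0"
    have sc: "(sin \<theta>)\<^sup>2 + c\<^sup>2 = 1" by (simp add: c_def)
    have "(u - c)\<^sup>2 + (sin \<theta>)\<^sup>2 = 0" using n0 sc by (simp add: power2_eq_square algebra_simps)
    then have "(u - c)\<^sup>2 = 0" "(sin \<theta>)\<^sup>2 = 0"
      by (simp_all add: add_nonneg_eq_0_iff)
    then have "u = c" "(sin \<theta>)\<^sup>2 = 0" by simp_all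
    then have "c\<^sup>2 = 1" using sc by simp
    then have "c = 1 \<or> c = -1" by (simp add: power2_eq_1_iff)
    then show False using \<open>u = c\<close> u0 by auto
  qed
  have L: "L \<noteq> 0" using m n by (simp add: L_def)
  have eq: "gauss_curvature (theta_family U w0 P a \<mu> \<theta>) w = - (L / 2) * (128 * m\<^sup>2 * A * p) / (L\<^sup>2)\<^sup>2"
    unfolding core[OF U ha hm wU] Let_def L_def m_def u_def A_def p_def c_def by simp
  have "- (L / 2) * (128 * m\<^sup>2 * A * p) / (L\<^sup>2)\<^sup>2 = 0"
    using K wU eq by metis
  then have "A = 0 \<or> p = 0" using L m by simp
  moreover have "A = 0 \<Longrightarrow> deriv a w = 0" by (simp add: A_def msq_def complex_eq_iff)
  ultimately show "deriv a w = 0 \<or> 2 * (cmod (a w))\<^sup>2 - cos \<theta> - cos \<theta> * ((cmod (a w))\<^sup>2)\<^sup>2 = 0"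
    by (auto simp: p_def u c_def)
qed

lemma L3_cone: "L3 z \<in> light_cone"
  unfolding light_cone_def L3_def vec4_def lor_def
  apply (simp add: algebra_simps power2_eq_square)
  apply (rule exI[of _ 0])
  by (simp add: add_nonneg_eq_0_iff)

lemma L0_cone: "L0 z \<in> light_cone"
  unfolding light_cone_def L0_def vec4_def lor_def
  apply (simp add: algebra_simps power2_eq_square)
  apply (rule exI[of _ 0])
  by (simp add: add_nonneg_eq_0_iff)

lemma L3_inj: "L3 z = L3 y \<Longrightarrow> z = y"
proof -
  assume h: "L3 z = L3 y"
  have "L3 z 1 = L3 y 1" "L3 z 2 = L3 y 2" using h by auto
  then show "z = y" unfolding L3_def vec4_def by (simp add: complex_eq_iff)
qed
theorem mainTheorem11:
  fixes U :: "complex set" and a \<mu> :: "complex \<Rightarrow> complex"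
    and w0 :: complex and P :: "nat \<Rightarrow> real"
  assumes "open U" and "connected U" and "simply_connected U"
    and "w0 \<in> U"
    and "a holomorphic_on U" and "\<mu> holomorphic_on U"
    and "\<forall>w\<in>U. \<mu> w \<noteq> 0" and "\<forall>w\<in>U. cmod (a w) \<noteq> 1"
  shows
   "((\<exists>\<theta>0::real. \<forall>w\<in>U. gauss_curvature (theta_family U w0 P a \<mu> \<theta>0) w = 0)
       \<longleftrightarrow> (\<exists>c. \<forall>w\<in>U. a w = c))
  \<and> ((\<exists>c. \<forall>w\<in>U. a w = c)
       \<longleftrightarrow> (\<forall>\<theta>::real. (\<exists>c\<in>light_cone. \<forall>w\<in>U. L3 (a w) = c)
                    \<and> (\<exists>c\<in>light_cone. \<forall>w\<in>U. L0 (exp (\<i> * of_real \<theta>) * a w) = c)))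
  \<and> ((\<exists>c. \<forall>w\<in>U. a w = c)
       \<longleftrightarrow> (\<forall>\<theta>::real. planar_points (theta_family U w0 P a \<mu> \<theta>) U = U))"
proof -
  let ?C = "\<exists>c. \<forall>w\<in>U. a w = c"
  note U = assms(1,3,4)
  have pl: "planar_points f U = U \<longleftrightarrow> (\<forall>w\<in>U. gauss_curvature f w = 0)" for f
    by (auto simp: planar_points_def)
  have p1: "(\<exists>\<theta>0::real. \<forall>w\<in>U. gauss_curvature (theta_family U w0 P a \<mu> \<theta>0) w = 0) \<longleftrightarrow> ?C"
  proof
    assume "\<exists>\<theta>0::real. \<forall>w\<in>U. gauss_curvature (theta_family U w0 P a \<mu> \<theta>0) w = 0"
    then obtain \<theta>0 where "\<forall>w\<in>U. gauss_curvature (theta_family U w0 P a \<mu> \<theta>0) w = 0" by blast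
    then show ?C by (rule K_zero_const[OF U assms(5-8)])
  next
    assume ?C
    then show "\<exists>\<theta>0::real. \<forall>w\<in>U. gauss_curvature (theta_family U w0 P a \<mu> \<theta>0) w = 0"
      using K_const_zero[OF U assms(5,6) \<open>?C\<close>] by blast
  qed
  have p2: "?C \<longleftrightarrow> (\<forall>\<theta>::real. (\<exists>c\<in>light_cone. \<forall>w\<in>U. L3 (a w) = c)
                    \<and> (\<exists>c\<in>light_cone. \<forall>w\<in>U. L0 (exp (\<i> * of_real \<theta>) * a w) = c))"
  proof
    assume ?C
    then obtain C where C: "\<forall>w\<in>U. a w = C" by blast
    show "\<forall>\<theta>::real. (\<exists>c\<in>light_cone. \<forall>w\<in>U. L3 (a w) = c)
                    \<and> (\<exists>c\<in>light_cone. \<forall>w\<in>U. L0 (exp (\<i> * of_real \<theta>) * a w) = c)"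
    proof
      fix \<theta> :: real
      show "(\<exists>c\<in>light_cone. \<forall>w\<in>U. L3 (a w) = c)
                    \<and> (\<exists>c\<in>light_cone. \<forall>w\<in>U. L0 (exp (\<i> * of_real \<theta>) * a w) = c)"
        using C L3_cone[of C] L0_cone[of "exp (\<i> * of_real \<theta>) * C"] by auto
    qed
  next
    assume "\<forall>\<theta>::real. (\<exists>c\<in>light_cone. \<forall>w\<in>U. L3 (a w) = c)
                    \<and> (\<exists>c\<in>light_cone. \<forall>w\<in>U. L0 (exp (\<i> * of_real \<theta>) * a w) = c)"
    then obtain c where c: "\<forall>w\<in>U. L3 (a w) = c" by blast
    have "\<forall>w\<in>U. a w = a w0" using c assms(4) L3_inj by metis
    then show ?C by blast
  qed
  have p3: "?C \<longleftrightarrow> (\<forall>\<theta>::real. planar_points (theta_family U w0 P a \<mu> \<theta>) U = U)"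
    unfolding pl
  proof
    assume ?C
    then show "\<forall>\<theta>::real. \<forall>w\<in>U. gauss_curvature (theta_family U w0 P a \<mu> \<theta>) w = 0"
      using K_const_zero[OF U assms(5,6)] by blast
  next
    assume "\<forall>\<theta>::real. \<forall>w\<in>U. gauss_curvature (theta_family U w0 P a \<mu> \<theta>) w = 0"
    then show ?C using p1 by blast
  qed
  show ?thesis using p1 p2 p3 by blast
qed


end
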